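(* Let $a\ge1$ and let $M_0,M_1,\dots,M_{a-1}$ be twisted $I$-adically incremental matrices with entries in $\mathbb{Z}_q[\![\underline\pi]\!]$. Write $\det(I-sM_{a-1}\cdots M_1M_0)=\sum_{k\ge0}(-1)^kr_k(\underline\pi)s^k$. Then for every $k\ge0$, $$\mathrm{val}_I(r_k(\underline\pi))\ge\frac{ak(k-1)(p-1)}{2d},$$ and $$r_k(\underline\pi)\equiv\prod_{j=0}^{a-1}\det\big((M_j)_{mn}\big)_{0\le m,n\le k-1}\pmod{I^{\lceil\frac{ak(k-1)(p-1)+(p-1)}{2d}\rceil}}.$$
   Context: $p$ prime, $d$ a positive integer, $\mathbb{Z}_q$ the unramified extension of $\mathbb{Z}_p$ with residue field $\mathbb{F}_q$, $I=(\pi_1,\dots,\pi_\ell)\subseteq\mathbb{Z}_q[\![\pi_1,\dots,\pi_\ell]\!]$. Define $\mathrm{val}_I(x)=n$ if $x\in I^n\setminus I^{n+1}$ and $\mathrm{val}_I(0)=\infty$. Matrices have rows and columns indexed by $\mathbb{Z}_{\ge0}$. A matrix $(h_{mn})_{m,n\ge0}$ over $\mathbb{Z}_q[\![\underline\pi]\!]$ is twisted $I$-adically incremental if $\mathrm{val}_I(h_{mn})\ge\frac{mp-n}{d}$ for all $m,n\ge0$. Products of such infinite matrices and their characteristic power series $\det(I-sM)=\sum_k(-1)^ks^k\sum_{m_0<\dots<m_{k-1}}\det(M_{m_im_j})$ converge $I$-adically. *)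

theory Defs
  imports "HOL-Analysis.Analysis"
begin

text \<open>Multivariate formal power series in the variables indexed by a finite type 'v
  (so the number of variables is CARD('v)) with coefficients in a commutative ring 'a.
  A series is its coefficient function on exponent vectors (monomials) e :: 'v \<Rightarrow> nat.\<close>

type_synonym ('v, 'a) mps = "('v \<Rightarrow> nat) \<Rightarrow> 'a"

definition mdeg :: "('v::finite \<Rightarrow> nat) \<Rightarrow> nat" where
  "mdeg e = (\<Sum>v\<in>UNIV. e v)"

definition mps_zero :: "('v, 'a::zero) mps" where
  "mps_zero = (\<lambda>_. 0)"

definition mps_one :: "('v, 'a::{zero,one}) mps" where
  "mps_one = (\<lambda>e. if e = (\<lambda>_. 0) then 1 else 0)"

definition mps_of_int :: "int \<Rightarrow> ('v, 'a::ring_1) mps" where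
  "mps_of_int k = (\<lambda>e. if e = (\<lambda>_. 0) then of_int k else 0)"

definition mps_add :: "('v, 'a::plus) mps \<Rightarrow> ('v, 'a) mps \<Rightarrow> ('v, 'a) mps" where
  "mps_add f g = (\<lambda>e. f e + g e)"

definition mps_diff :: "('v, 'a::minus) mps \<Rightarrow> ('v, 'a) mps \<Rightarrow> ('v, 'a) mps" where
  "mps_diff f g = (\<lambda>e. f e - g e)"

definition mps_mult :: "('v::finite, 'a::comm_ring_1) mps \<Rightarrow> ('v, 'a) mps \<Rightarrow> ('v, 'a) mps" where
  "mps_mult f g = (\<lambda>e. \<Sum>e1\<in>{e1. e1 \<le> e}. f e1 * g (\<lambda>v. e v - e1 v))"

text \<open>The n-th power of the ideal I = (pi_1,...,pi_l): series all of whose monomials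
  have total degree at least n.\<close>
definition Ipow :: "nat \<Rightarrow> ('v::finite, 'a::zero) mps set" where
  "Ipow n = {f. \<forall>e. mdeg e < n \<longrightarrow> f e = 0}"

definition valI :: "('v::finite, 'a::zero) mps \<Rightarrow> enat" where
  "valI f = (if f = mps_zero then \<infinity> else enat (THE n. f \<in> Ipow n \<and> f \<notin> Ipow (Suc n)))"

definition valI_ge :: "('v::finite, 'a::zero) mps \<Rightarrow> real \<Rightarrow> bool" where
  "valI_ge f c = (case valI f of \<infinity> \<Rightarrow> True | enat n \<Rightarrow> c \<le> real n)"

text \<open>I-adic sum of a family of series, computed coefficientwise: for an I-adically
  convergent family only finitely many members have a nonzero coefficient at a given
  monomial (there are finitely many monomials of each degree), and the I-adic limit of
  the partial sums has exactly these coefficients.\<close>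
definition isum :: "'i set \<Rightarrow> ('i \<Rightarrow> ('v, 'a::comm_monoid_add) mps) \<Rightarrow> ('v, 'a) mps" where
  "isum A F = (\<lambda>e. \<Sum>i\<in>{i\<in>A. F i e \<noteq> 0}. F i e)"

definition mps_prod_list :: "('v::finite, 'a::comm_ring_1) mps list \<Rightarrow> ('v, 'a) mps" where
  "mps_prod_list fs = foldr mps_mult fs mps_one"

definition mps_prod :: "nat set \<Rightarrow> (nat \<Rightarrow> ('v::finite, 'a::comm_ring_1) mps) \<Rightarrow> ('v, 'a) mps" where
  "mps_prod S F = mps_prod_list (map F (sorted_list_of_set S))"

type_synonym ('v, 'a) imat = "nat \<Rightarrow> nat \<Rightarrow> ('v, 'a) mps"

definition twisted_incremental :: "nat \<Rightarrow> nat \<Rightarrow> ('v::finite, 'a::zero) imat \<Rightarrow> bool" where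
  "twisted_incremental p d M \<longleftrightarrow>
     (\<forall>m n. valI_ge (M m n) ((real m * real p - real n) / real d))"

definition mat_mult :: "('v::finite, 'a::comm_ring_1) imat \<Rightarrow> ('v, 'a) imat \<Rightarrow> ('v, 'a) imat" where
  "mat_mult A B = (\<lambda>m n. isum UNIV (\<lambda>k. mps_mult (A m k) (B k n)))"

definition mat_id :: "('v, 'a::comm_ring_1) imat" where
  "mat_id = (\<lambda>m n. if m = n then mps_one else mps_zero)"

fun mat_chain :: "(nat \<Rightarrow> ('v::finite, 'a::comm_ring_1) imat) \<Rightarrow> nat \<Rightarrow> ('v, 'a) imat" where
  "mat_chain M 0 = mat_id"
| "mat_chain M (Suc j) = mat_mult (M j) (mat_chain M j)"

definition minor_det :: "('v::finite, 'a::comm_ring_1) imat \<Rightarrow> nat set \<Rightarrow> ('v, 'a) mps" where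
  "minor_det A S = isum {\<sigma>. \<sigma> permutes S}
     (\<lambda>\<sigma>. mps_mult (mps_of_int (sign \<sigma>)) (mps_prod S (\<lambda>i. A i (\<sigma> i))))"

text \<open>det(I - sA) = sum_k (-1)^k r_k s^k with r_k = sum over m_0<...<m_{k-1} of the
  principal minors.\<close>
definition char_coeff :: "('v::finite, 'a::comm_ring_1) imat \<Rightarrow> nat \<Rightarrow> ('v, 'a) mps" where
  "char_coeff A k = isum {S. finite S \<and> card S = k} (\<lambda>S. minor_det A S)"

end

theory Submission
  imports Defs
begin

definition subf :: "('v \<Rightarrow> nat) \<Rightarrow> ('v \<Rightarrow> nat) \<Rightarrow> ('v \<Rightarrow> nat)" where
  "subf e x = (\<lambda>v. e v - x v)"
definition addf :: "('v \<Rightarrow> nat) \<Rightarrow> ('v \<Rightarrow> nat) \<Rightarrow> ('v \<Rightarrow> nat)" where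
  "addf e x = (\<lambda>v. e v + x v)"

lemma fin_le: "finite {e1::'v::finite \<Rightarrow> nat. e1 \<le> e}"
proof -
  have "{e1. e1 \<le> e} \<subseteq> PiE UNIV (\<lambda>v. {..e v})"
    by (auto simp: le_fun_def PiE_def extensional_def)
  then show ?thesis by (rule finite_subset) (rule finite_PiE, auto)
qed

lemma mm_def2: "mps_mult f g e = (\<Sum>x\<in>{x. x \<le> e}. f x * g (subf e x))"
  by (simp add: mps_mult_def subf_def)

lemma mult_comm: "mps_mult f g = mps_mult (g::('v::finite,'a::comm_ring_1) mps) f"
proof (rule ext)
  fix e
  show "mps_mult f g e = mps_mult g f e"
    unfolding mm_def2
    by (rule sum.reindex_bij_witness[where i="subf e" and j="subf e"])
       (auto simp: le_fun_def subf_def fun_eq_iff mult.commute)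
qed

lemma subf_mono: "y \<le> a \<Longrightarrow> a \<le> e \<Longrightarrow> subf a y \<le> subf e y"
  unfolding le_fun_def subf_def by (meson diff_le_mono)
lemma addf_le: "b \<le> subf e y \<Longrightarrow> y \<le> e \<Longrightarrow> addf y b \<le> e"
  unfolding le_fun_def subf_def addf_def by (metis add.commute le_diff_conv2)
lemma addf_ge: "y \<le> addf y b" by (simp add: le_fun_def addf_def)
lemma subf_addf: "subf (addf y b) y = b" by (simp add: fun_eq_iff addf_def subf_def)
lemma addf_subf: "y \<le> a \<Longrightarrow> addf y (subf a y) = a" by (simp add: fun_eq_iff addf_def subf_def le_fun_def)
lemma subf_subf: assumes "y \<le> a" "a \<le> e" shows "subf (subf e y) (subf a y) = subf e a"
proof (rule ext)
  fix v from assms have "y v \<le> a v" "a v \<le> e v" by (auto simp: le_fun_def)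
  then show "subf (subf e y) (subf a y) v = subf e a v" by (simp add: subf_def)
qed

lemma mult_assoc: "mps_mult (mps_mult f g) h = mps_mult f (mps_mult g (h::('v::finite,'a::comm_ring_1) mps))"
proof (rule ext)
  fix e
  have "mps_mult (mps_mult f g) h e = (\<Sum>x\<in>{x. x \<le> e}. \<Sum>y\<in>{y. y \<le> x}. f y * g (subf x y) * h (subf e x))"
    unfolding mm_def2 by (simp add: sum_distrib_right)
  also have "\<dots> = (\<Sum>x\<in>{x. x \<le> e}. \<Sum>y\<in>{y\<in>{y. y \<le> e}. y \<le> x}. f y * g (subf x y) * h (subf e x))"
    by (rule sum.cong, simp, rule sum.cong, auto intro: order_trans)
  also have "\<dots> = (\<Sum>y\<in>{y. y \<le> e}. \<Sum>x\<in>{x\<in>{x. x \<le> e}. y \<le> x}. f y * g (subf x y) * h (subf e x))"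
    by (rule sum.swap_restrict) (auto simp: fin_le)
  also have "\<dots> = (\<Sum>y\<in>{y. y \<le> e}. \<Sum>z\<in>{z. z \<le> subf e y}. f y * g z * h (subf (subf e y) z))"
  proof (rule sum.cong, simp)
    fix y assume y: "y \<in> {y. y \<le> e}"
    show "(\<Sum>x\<in>{x\<in>{x. x \<le> e}. y \<le> x}. f y * g (subf x y) * h (subf e x)) =
          (\<Sum>z\<in>{z. z \<le> subf e y}. f y * g z * h (subf (subf e y) z))"
      by (rule sum.reindex_bij_witness[where j="\<lambda>x. subf x y" and i="addf y"])
         (use y in \<open>auto simp: subf_mono addf_le addf_ge subf_addf addf_subf subf_subf\<close>)
  qed
  also have "\<dots> = mps_mult f (mps_mult g h) e"
    unfolding mm_def2 by (simp add: sum_distrib_left mult.assoc)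
  finally show "mps_mult (mps_mult f g) h e = mps_mult f (mps_mult g h) e" .
qed

lemma mult_one: "mps_mult mps_one f = (f::('v::finite,'a::comm_ring_1) mps)"
proof (rule ext)
  fix e
  have "mps_mult mps_one f e = (\<Sum>x\<in>{x. x \<le> e}. if x = (\<lambda>_. 0) then f (subf e x) else 0)"
    unfolding mm_def2 mps_one_def by (rule sum.cong) auto
  also have "\<dots> = f e"
    by (subst sum.delta[OF fin_le]) (auto simp: subf_def le_fun_def)
  finally show "mps_mult mps_one f e = f e" .
qed

lemma mult_distrib: "mps_mult (mps_add f g) h = mps_add (mps_mult f h) (mps_mult g (h::('v::finite,'a::comm_ring_1) mps))"
  by (rule ext) (simp add: mm_def2 mps_add_def sum.distrib distrib_right)

typedef (overloaded) ('v::finite, 'a::comm_ring_1) ms = "UNIV :: (('v \<Rightarrow> nat) \<Rightarrow> 'a) set"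
  by simp

setup_lifting type_definition_ms

instantiation ms :: (finite, comm_ring_1) comm_ring_1
begin
lift_definition zero_ms :: "('a,'b) ms" is mps_zero .
lift_definition one_ms :: "('a,'b) ms" is mps_one .
lift_definition plus_ms :: "('a,'b) ms \<Rightarrow> ('a,'b) ms \<Rightarrow> ('a,'b) ms" is mps_add .
lift_definition minus_ms :: "('a,'b) ms \<Rightarrow> ('a,'b) ms \<Rightarrow> ('a,'b) ms" is mps_diff .
lift_definition uminus_ms :: "('a,'b) ms \<Rightarrow> ('a,'b) ms" is "\<lambda>f e. - f e" .
lift_definition times_ms :: "('a,'b) ms \<Rightarrow> ('a,'b) ms \<Rightarrow> ('a,'b) ms" is mps_mult .
instance
proof
  fix a b c :: "('a,'b) ms"
  show "a * b * c = a * (b * c)" by transfer (rule mult_assoc)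
  show "a * b = b * a" by transfer (rule mult_comm)
  show "1 * a = a" by transfer (rule mult_one)
  show "(a + b) * c = a * c + b * c" by transfer (rule mult_distrib)
  show "a + b + c = a + (b + c)" by transfer (simp add: mps_add_def add.assoc)
  show "a + b = b + a" by transfer (simp add: mps_add_def add.commute)
  show "0 + a = a" by transfer (simp add: mps_add_def mps_zero_def)
  show "- a + a = 0" by transfer (simp add: mps_add_def mps_zero_def)
  show "a - b = a + - b" by transfer (simp add: mps_add_def mps_diff_def)
  show "(0::('a,'b) ms) \<noteq> 1"
  proof transfer
    show "mps_zero \<noteq> (mps_one :: ('a,'b) mps)"
    proof
      assume "mps_zero = (mps_one :: ('a,'b) mps)"
      then show False by (auto simp: fun_eq_iff mps_zero_def mps_one_def dest: spec[of _ "\<lambda>_. 0"])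
    qed
  qed
qed
end



definition Dg :: "(nat \<Rightarrow> nat \<Rightarrow> 'r::comm_ring_1) \<Rightarrow> nat set \<Rightarrow> (nat \<Rightarrow> nat) \<Rightarrow> (nat \<Rightarrow> nat) \<Rightarrow> 'r" where
  "Dg A I r c = (\<Sum>\<sigma> | \<sigma> permutes I. of_int (sign \<sigma>) * (\<Prod>i\<in>I. A (r i) (c (\<sigma> i))))"

lemma Dg_cong:
  assumes "\<And>i. i \<in> I \<Longrightarrow> r i = r' i" "\<And>i. i \<in> I \<Longrightarrow> c i = c' i"
  shows "Dg A I r c = Dg A I r' c'"
  unfolding Dg_def
  by (rule sum.cong, simp, rule arg_cong[where f="\<lambda>x. _ * x"], rule prod.cong)
     (auto simp: assms permutes_in_image)

lemma Dg_row_perm: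
  assumes I: "finite I" and t: "\<tau> permutes I"
  shows "Dg A I (r \<circ> \<tau>) c = of_int (sign \<tau>) * Dg A I r c"
proof -
  have "Dg A I (r \<circ> \<tau>) c = (\<Sum>\<sigma> | \<sigma> permutes I. of_int (sign (\<sigma> \<circ> \<tau>)) * (\<Prod>i\<in>I. A (r (\<tau> i)) (c (\<sigma> (\<tau> i)))))"
    unfolding Dg_def by (subst sum_permutations_compose_right[OF t]) simp
  also have "\<dots> = (\<Sum>\<sigma> | \<sigma> permutes I. of_int (sign \<tau>) * (of_int (sign \<sigma>) * (\<Prod>i\<in>I. A (r i) (c (\<sigma> i)))))"
  proof (rule sum.cong, simp)
    fix \<sigma> assume "\<sigma> \<in> {\<sigma>. \<sigma> permutes I}"
    then have s: "\<sigma> permutes I" by simp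
    have p1: "(\<Prod>i\<in>I. A (r (\<tau> i)) (c (\<sigma> (\<tau> i)))) = (\<Prod>i\<in>I. A (r i) (c (\<sigma> i)))"
      using prod.permute[OF t, of "\<lambda>i. A (r i) (c (\<sigma> i))"] by (simp add: o_def)
    have "permutation \<sigma>" "permutation \<tau>" using s t I permutation_permutes by blast+
    then have "sign (\<sigma> \<circ> \<tau>) = sign \<sigma> * sign \<tau>" by (rule sign_compose)
    then show "of_int (sign (\<sigma> \<circ> \<tau>)) * (\<Prod>i\<in>I. A (r (\<tau> i)) (c (\<sigma> (\<tau> i)))) =
       of_int (sign \<tau>) * (of_int (sign \<sigma>) * (\<Prod>i\<in>I. A (r i) (c (\<sigma> i))))"
      by (simp add: p1 mult_ac)
  qed
  also have "\<dots> = of_int (sign \<tau>) * Dg A I r c"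
    unfolding Dg_def by (simp add: sum_distrib_left)
  finally show ?thesis .
qed



lemma mdeg_split: "e1 \<le> e \<Longrightarrow> mdeg e1 + mdeg (subf e e1) = mdeg (e::'v::finite \<Rightarrow> nat)"
  unfolding mdeg_def subf_def by (simp add: sum.distrib[symmetric] le_fun_def)

definition vg :: "('v::finite,'a::comm_ring_1) ms \<Rightarrow> real \<Rightarrow> bool" where
  "vg x c \<longleftrightarrow> (\<forall>e. real (mdeg e) < c \<longrightarrow> Rep_ms x e = 0)"

lemma Rep_zero: "Rep_ms 0 e = 0" by (simp add: zero_ms.rep_eq mps_zero_def)
lemma Rep_add: "Rep_ms (x + y) e = Rep_ms x e + Rep_ms y e" by (simp add: plus_ms.rep_eq mps_add_def)
lemma Rep_diff: "Rep_ms (x - y) e = Rep_ms x e - Rep_ms y e" by (simp add: minus_ms.rep_eq mps_diff_def)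
lemma Rep_minus: "Rep_ms (- x) e = - Rep_ms x e" by (simp add: uminus_ms.rep_eq)
lemma Rep_mult: "Rep_ms (x * y) = mps_mult (Rep_ms x) (Rep_ms y)" by (simp add: times_ms.rep_eq)
lemma Rep_one: "Rep_ms 1 = mps_one" by (simp add: one_ms.rep_eq)
lemma Rep_Abs: "Rep_ms (Abs_ms f) = f" by (simp add: Abs_ms_inverse)

lemma Rep_sum: "Rep_ms (sum F A) e = (\<Sum>i\<in>A. Rep_ms (F i) e)"
  by (induction A rule: infinite_finite_induct) (auto simp: Rep_zero Rep_add)

lemma Abs_mult: "Abs_ms (mps_mult f g) = Abs_ms f * Abs_ms g"
  by (metis Rep_Abs Rep_mult Rep_ms_inverse)

lemma Rep_of_int: "Rep_ms (of_int k :: ('v::finite,'a::comm_ring_1) ms) = mps_of_int k"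
proof (induction k rule: int_induct[where k=0])
  case base then show ?case by (simp add: zero_ms.rep_eq mps_zero_def mps_of_int_def fun_eq_iff)
next
  case (step1 i) then show ?case
    by (auto simp: fun_eq_iff Rep_add Rep_one mps_one_def mps_of_int_def)
next
  case (step2 i) then show ?case
    by (auto simp: fun_eq_iff Rep_diff Rep_one mps_one_def mps_of_int_def)
qed

lemma vg_zero: "vg 0 c" by (simp add: vg_def Rep_zero)
lemma vg_add: "vg x c \<Longrightarrow> vg y c \<Longrightarrow> vg (x + y) c" by (simp add: vg_def Rep_add)
lemma vg_diff: "vg x c \<Longrightarrow> vg y c \<Longrightarrow> vg (x - y) c" by (simp add: vg_def Rep_diff)
lemma vg_minus: "vg x c \<Longrightarrow> vg (- x) c" by (simp add: vg_def Rep_minus)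
lemma vg_mono: "vg x c \<Longrightarrow> c' \<le> c \<Longrightarrow> vg x c'" by (auto simp: vg_def)
lemma vg_le0: "c \<le> 0 \<Longrightarrow> vg x c" by (auto simp: vg_def)
lemma vg_sum: "(\<And>i. i \<in> A \<Longrightarrow> vg (F i) c) \<Longrightarrow> vg (sum F A) c"
  by (simp add: vg_def Rep_sum)

lemma vg_mult: assumes "vg x c" "vg y c'" shows "vg (x * y) (c + c')"
  unfolding vg_def
proof (intro allI impI)
  fix e :: "'a \<Rightarrow> nat" assume e: "real (mdeg e) < c + c'"
  have "Rep_ms (x * y) e = (\<Sum>e1\<in>{e1. e1 \<le> e}. Rep_ms x e1 * Rep_ms y (subf e e1))"
    by (simp add: Rep_mult mm_def2)
  also have "\<dots> = 0"
  proof (rule sum.neutral, intro ballI)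
    fix e1 assume "e1 \<in> {e1. e1 \<le> e}"
    then have "mdeg e1 + mdeg (subf e e1) = mdeg e" by (simp add: mdeg_split)
    then have "real (mdeg e1) < c \<or> real (mdeg (subf e e1)) < c'" using e by linarith
    then show "Rep_ms x e1 * Rep_ms y (subf e e1) = 0" using assms by (auto simp: vg_def)
  qed
  finally show "Rep_ms (x * y) e = 0" .
qed

lemma vg_mult_left: "vg y c \<Longrightarrow> vg (x * y) c"
  using vg_mult[of x 0 y c] vg_le0[of 0 x] by simp

lemma vg_prod: "finite I \<Longrightarrow> (\<And>i. i \<in> I \<Longrightarrow> vg (x i) (g i)) \<Longrightarrow> vg (\<Prod>i\<in>I. x i) (\<Sum>i\<in>I. g i)"
proof (induction I rule: finite_induct)
  case empty then show ?case by (simp add: vg_le0)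
next
  case (insert a I) then show ?case by (simp add: vg_mult)
qed

lemma ring_id: "(a::'r::comm_ring) * X - b * Y = a * (X - Y) + Y * (a - b)"
  by (simp add: algebra_simps)

lemma vg_prod_diff: "finite I \<Longrightarrow> (\<And>i. i \<in> I \<Longrightarrow> vg (x i - y i) L) \<Longrightarrow> vg ((\<Prod>i\<in>I. x i) - (\<Prod>i\<in>I. y i)) L"
proof (induction I rule: finite_induct)
  case empty then show ?case by (simp add: vg_zero)
next
  case (insert a I)
  have "(\<Prod>i\<in>insert a I. x i) - (\<Prod>i\<in>insert a I. y i) =
        x a * (\<Prod>i\<in>I. x i) - y a * (\<Prod>i\<in>I. y i)" using insert by simp
  also have "\<dots> = x a * ((\<Prod>i\<in>I. x i) - (\<Prod>i\<in>I. y i)) + (\<Prod>i\<in>I. y i) * (x a - y a)"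
    by (rule ring_id)
  then show ?case using insert by (simp add: vg_add vg_mult_left)
qed

lemma Dg_vg_diff:
  assumes I: "finite I" and h: "\<And>i i'. i \<in> I \<Longrightarrow> i' \<in> I \<Longrightarrow> vg (X (r i) (c i') - Y (r i) (c i')) L"
  shows "vg (Dg X I r c - Dg Y I r c) L"
proof -
  have "Dg X I r c - Dg Y I r c = (\<Sum>\<sigma> | \<sigma> permutes I. of_int (sign \<sigma>) *
      ((\<Prod>i\<in>I. X (r i) (c (\<sigma> i))) - (\<Prod>i\<in>I. Y (r i) (c (\<sigma> i)))))"
    unfolding Dg_def by (simp add: sum_subtractf[symmetric] right_diff_distrib)
  also have "vg \<dots> L"
  proof (rule vg_sum, rule vg_mult_left, rule vg_prod_diff[OF I])
    fix \<sigma> i assume "\<sigma> \<in> {\<sigma>. \<sigma> permutes I}" "i \<in> I"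
    then have "\<sigma> permutes I" "i \<in> I" by auto
    then have "\<sigma> i \<in> I" by (simp add: permutes_in_image)
    then show "vg (X (r i) (c (\<sigma> i)) - Y (r i) (c (\<sigma> i))) L"
      using h \<open>i \<in> I\<close> by blast
  qed
  finally show ?thesis .
qed



lemma Dg_identical:
  assumes I: "finite I" and ij: "i \<in> I" "j \<in> I" "i \<noteq> j" and r: "r i = r j"
  shows "Dg A I r c = 0"
proof -
  let ?t = "Transposition.transpose i j"
  let ?g = "\<lambda>\<sigma>. of_int (sign \<sigma>) * (\<Prod>l\<in>I. A (r l) (c (\<sigma> l)))"
  let ?S = "{\<sigma>. \<sigma> permutes I}"
  let ?E = "{\<sigma>\<in>?S. evenperm \<sigma>}"
  let ?O = "{\<sigma>\<in>?S. \<not> evenperm \<sigma>}"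
  have t: "?t permutes I" using ij by (simp add: permutes_swap_id)
  have tp: "permutation ?t" using t I permutation_permutes by blast
  have tev: "\<not> evenperm ?t" using ij by (simp add: evenperm_swap)
  have rt: "r (?t l) = r l" for l using r by (auto simp: Transposition.transpose_def)
  have fin: "finite ?S" using I finite_permutations by blast
  have "sum ?g ?S = sum ?g ?E + sum ?g ?O"
    by (subst sum.union_disjoint[symmetric]) (use fin in \<open>auto intro: sum.cong\<close>)
  also have "sum ?g ?O = sum (\<lambda>\<sigma>. ?g (\<sigma> \<circ> ?t)) ?E"
  proof (rule sum.reindex_bij_witness[where i="\<lambda>\<sigma>. \<sigma> \<circ> ?t" and j="\<lambda>\<sigma>. \<sigma> \<circ> ?t"])
    fix \<sigma> assume "\<sigma> \<in> ?O"
    then have s: "\<sigma> permutes I" "\<not> evenperm \<sigma>" by auto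
    have sp: "permutation \<sigma>" using s I permutation_permutes by blast
    show "\<sigma> \<circ> ?t \<circ> ?t = \<sigma>" by (simp add: o_assoc[symmetric])
    show "\<sigma> \<circ> ?t \<in> ?E" using s sp tp tev by (simp add: permutes_compose[OF t] evenperm_comp)
  next
    fix \<sigma> assume "\<sigma> \<in> ?E"
    then have s: "\<sigma> permutes I" "evenperm \<sigma>" by auto
    have sp: "permutation \<sigma>" using s I permutation_permutes by blast
    show "\<sigma> \<circ> ?t \<circ> ?t = \<sigma>" by (simp add: o_assoc[symmetric])
    show "\<sigma> \<circ> ?t \<in> ?O" using s sp tp tev by (simp add: permutes_compose[OF t] evenperm_comp)
  next
    fix \<sigma> assume "\<sigma> \<in> ?O"
    show "?g (\<sigma> \<circ> ?t \<circ> ?t) = ?g \<sigma>" by (simp add: o_assoc[symmetric])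
  qed
  also have "sum (\<lambda>\<sigma>. ?g (\<sigma> \<circ> ?t)) ?E = sum (\<lambda>\<sigma>. - ?g \<sigma>) ?E"
  proof (rule sum.cong, simp)
    fix \<sigma> assume "\<sigma> \<in> ?E"
    then have s: "\<sigma> permutes I" by auto
    have sp: "permutation \<sigma>" using s I permutation_permutes by blast
    have p1: "(\<Prod>l\<in>I. A (r l) (c (\<sigma> (?t l)))) = (\<Prod>l\<in>I. A (r l) (c (\<sigma> l)))"
      using prod.permute[OF t, of "\<lambda>l. A (r l) (c (\<sigma> l))"] by (simp add: o_def rt)
    have "sign (\<sigma> \<circ> ?t) = - sign \<sigma>"
      using ij by (simp add: sign_compose[OF sp tp] sign_swap_id)
    then show "?g (\<sigma> \<circ> ?t) = - ?g \<sigma>" by (simp add: p1)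
  qed
  finally show ?thesis unfolding Dg_def by (simp add: sum_negf)
qed



lemma Dg_CB:
  assumes I: "finite I" and L: "finite L"
  shows "Dg (\<lambda>m n. \<Sum>l\<in>L. A m l * B l n) I r c =
         (\<Sum>f\<in>PiE I (\<lambda>_. L). (\<Prod>i\<in>I. A (r i) (f i)) * Dg B I f c)"
proof -
  have "Dg (\<lambda>m n. \<Sum>l\<in>L. A m l * B l n) I r c =
     (\<Sum>\<sigma> | \<sigma> permutes I. \<Sum>f\<in>PiE I (\<lambda>_. L). of_int (sign \<sigma>) * ((\<Prod>i\<in>I. A (r i) (f i)) * (\<Prod>i\<in>I. B (f i) (c (\<sigma> i)))))"
    unfolding Dg_def
  proof (rule sum.cong, simp)
    fix \<sigma>
    have "(\<Prod>i\<in>I. \<Sum>l\<in>L. A (r i) l * B l (c (\<sigma> i))) =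
          (\<Sum>f\<in>PiE I (\<lambda>_. L). \<Prod>i\<in>I. A (r i) (f i) * B (f i) (c (\<sigma> i)))"
      by (rule prod_sum_PiE) (use I L in auto)
    also have "\<dots> = (\<Sum>f\<in>PiE I (\<lambda>_. L). (\<Prod>i\<in>I. A (r i) (f i)) * (\<Prod>i\<in>I. B (f i) (c (\<sigma> i))))"
      by (simp only: prod.distrib)
    finally show "of_int (sign \<sigma>) * (\<Prod>i\<in>I. \<Sum>l\<in>L. A (r i) l * B l (c (\<sigma> i))) =
      (\<Sum>f\<in>PiE I (\<lambda>_. L). of_int (sign \<sigma>) * ((\<Prod>i\<in>I. A (r i) (f i)) * (\<Prod>i\<in>I. B (f i) (c (\<sigma> i)))))"
      by (simp only: sum_distrib_left)
  qed
  also have "\<dots> = (\<Sum>f\<in>PiE I (\<lambda>_. L). \<Sum>\<sigma> | \<sigma> permutes I. of_int (sign \<sigma>) * ((\<Prod>i\<in>I. A (r i) (f i)) * (\<Prod>i\<in>I. B (f i) (c (\<sigma> i)))))"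
    by (rule sum.swap)
  also have "\<dots> = (\<Sum>f\<in>PiE I (\<lambda>_. L). (\<Prod>i\<in>I. A (r i) (f i)) * Dg B I f c)"
    unfolding Dg_def by (simp add: sum_distrib_left mult_ac)
  finally show ?thesis .
qed

lemma Dg_main:
  assumes I: "finite I" and IL: "I \<subseteq> L"
  shows "(\<Sum>f\<in>{f\<in>PiE I (\<lambda>_. L). f ` I = I}. (\<Prod>i\<in>I. A i (f i)) * Dg B I f c) = Dg A I id id * Dg B I id c"
proof -
  have "(\<Sum>f\<in>{f\<in>PiE I (\<lambda>_. L). f ` I = I}. (\<Prod>i\<in>I. A i (f i)) * Dg B I f c) =
        (\<Sum>\<tau> | \<tau> permutes I. (\<Prod>i\<in>I. A i (\<tau> i)) * Dg B I \<tau> c)"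
  proof (rule sum.reindex_bij_witness[where j="\<lambda>f x. if x \<in> I then f x else x" and i="\<lambda>\<tau>. restrict \<tau> I"])
    fix f assume f: "f \<in> {f\<in>PiE I (\<lambda>_. L). f ` I = I}"
    then have fe: "f \<in> extensional I" and fI: "f ` I = I" by (auto simp: PiE_def)
    show "restrict (\<lambda>x. if x \<in> I then f x else x) I = f"
      using fe by (auto simp: restrict_def extensional_def fun_eq_iff)
    have "inj_on f I" using finite_surj_inj[OF I] fI by simp
    then have "bij_betw f I I" using fI by (simp add: bij_betw_def)
    then have "bij_betw (\<lambda>x. if x \<in> I then f x else x) I I"
      by (rule bij_betw_cong[THEN iffD1, rotated]) simp
    then show "(\<lambda>x. if x \<in> I then f x else x) \<in> {\<tau>. \<tau> permutes I}"
      by (auto intro: bij_imp_permutes)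
    show "(\<Prod>i\<in>I. A i ((\<lambda>x. if x \<in> I then f x else x) i)) * Dg B I (\<lambda>x. if x \<in> I then f x else x) c =
          (\<Prod>i\<in>I. A i (f i)) * Dg B I f c"
    proof -
      have "(\<Prod>i\<in>I. A i ((\<lambda>x. if x \<in> I then f x else x) i)) = (\<Prod>i\<in>I. A i (f i))"
        by (rule prod.cong) auto
      moreover have "Dg B I (\<lambda>x. if x \<in> I then f x else x) c = Dg B I f c"
        by (rule Dg_cong) auto
      ultimately show ?thesis by simp
    qed
  next
    fix \<tau> assume "\<tau> \<in> {\<tau>. \<tau> permutes I}"
    then have t: "\<tau> permutes I" by simp
    show "(\<lambda>x. if x \<in> I then restrict \<tau> I x else x) = \<tau>"
      using t by (auto simp: fun_eq_iff permutes_not_in)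
    show "restrict \<tau> I \<in> {f\<in>PiE I (\<lambda>_. L). f ` I = I}"
      using t IL permutes_image[OF t] permutes_in_image[OF t] by auto
  qed
  also have "\<dots> = (\<Sum>\<tau> | \<tau> permutes I. (\<Prod>i\<in>I. A i (\<tau> i)) * (of_int (sign \<tau>) * Dg B I id c))"
  proof (rule sum.cong, simp)
    fix \<tau> assume "\<tau> \<in> {\<tau>. \<tau> permutes I}"
    then have "Dg B I (id \<circ> \<tau>) c = of_int (sign \<tau>) * Dg B I id c"
      using Dg_row_perm[OF I, of \<tau> B id c] by simp
    then show "(\<Prod>i\<in>I. A i (\<tau> i)) * Dg B I \<tau> c = (\<Prod>i\<in>I. A i (\<tau> i)) * (of_int (sign \<tau>) * Dg B I id c)"
      by simp
  qed
  also have "\<dots> = Dg A I id id * Dg B I id c"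
    unfolding Dg_def[of A] sum_distrib_right by (rule sum.cong) (auto simp: mult_ac)
  finally show ?thesis .
qed



lemma arith1: "m * (m - 1) + 2 * m = Suc m * (m::nat)"
  by (cases m) auto

lemma sum_set_ge:
  "finite (U::nat set) \<Longrightarrow> card U * (card U - 1) \<le> 2 * \<Sum>U \<and>
     (U \<noteq> {0..<card U} \<longrightarrow> card U * (card U - 1) + 2 \<le> 2 * \<Sum>U)"
proof (induction "card U" arbitrary: U)
  case 0
  then show ?case by auto
next
  case (Suc m)
  then have ne: "U \<noteq> {}" by auto
  define m0 where "m0 = Max U"
  have m0U: "m0 \<in> U" using Suc.prems ne by (simp add: m0_def)
  have le: "\<And>x. x \<in> U \<Longrightarrow> x \<le> m0" using Suc.prems by (simp add: m0_def)
  define U' where "U' = U - {m0}"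
  have cU': "card U' = m" using Suc.hyps(2) m0U Suc.prems by (simp add: U'_def)
  have finU': "finite U'" using Suc.prems by (simp add: U'_def)
  have sU: "\<Sum>U = \<Sum>U' + m0" using Suc.prems m0U by (simp add: U'_def sum.remove)
  have "U \<subseteq> {0..m0}" using le by auto
  then have "card U \<le> Suc m0" using card_mono[of "{0..m0}" U] by simp
  then have mm0: "m \<le> m0" using Suc.hyps(2) by simp
  have IH: "m * (m - 1) \<le> 2 * \<Sum>U' \<and> (U' \<noteq> {0..<m} \<longrightarrow> m * (m - 1) + 2 \<le> 2 * \<Sum>U')"
    using Suc.hyps(1)[OF cU'[symmetric]] finU' cU' by simp
  have a: "Suc m * m \<le> 2 * \<Sum>U" using IH mm0 sU arith1[of m] by linarith
  have b: "Suc m * m + 2 \<le> 2 * \<Sum>U" if "U \<noteq> {0..<Suc m}"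
  proof (cases "m0 = m")
    case True
    have "U' \<noteq> {0..<m}"
    proof
      assume "U' = {0..<m}"
      then have "U = insert m {0..<m}" using m0U True by (auto simp: U'_def)
      then show False using that by auto
    qed
    then show ?thesis using IH mm0 sU arith1[of m] by linarith
  next
    case False
    then show ?thesis using IH mm0 sU arith1[of m] by linarith
  qed
  show ?case using a b Suc.hyps(2)[symmetric] by simp
qed

lemma sum_lessThan_id: "2 * (\<Sum>i<k. i) = k * (k - (1::nat))"
  by (induction k) (use arith1 in auto)



lemma valI_ge_iff: "valI_ge f c \<longleftrightarrow> (\<forall>e. real (mdeg e) < c \<longrightarrow> (f::('v::finite,'a::zero) mps) e = 0)"
proof (cases "f = mps_zero")
  case True then show ?thesis by (simp add: valI_ge_def valI_def mps_zero_def)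
next
  case False
  then obtain e0 where "f e0 \<noteq> 0" by (auto simp: mps_zero_def fun_eq_iff)
  define n0 where "n0 = (LEAST n. \<exists>e. mdeg e = n \<and> f e \<noteq> 0)"
  have a: "\<exists>e. mdeg e = n0 \<and> f e \<noteq> 0"
    unfolding n0_def by (rule LeastI[of _ "mdeg e0"]) (use \<open>f e0 \<noteq> 0\<close> in auto)
  have b: "f e \<noteq> 0 \<Longrightarrow> n0 \<le> mdeg e" for e
    unfolding n0_def by (rule Least_le) auto
  have th: "(THE n. f \<in> Ipow n \<and> f \<notin> Ipow (Suc n)) = n0"
  proof (rule the_equality)
    show "f \<in> Ipow n0 \<and> f \<notin> Ipow (Suc n0)"
      using a b by (auto simp: Ipow_def) (meson not_less)
  next
    fix n assume n: "f \<in> Ipow n \<and> f \<notin> Ipow (Suc n)"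
    have "n \<le> n0" using a n by (auto simp: Ipow_def) (meson not_less)
    moreover obtain e where "mdeg e < Suc n" "f e \<noteq> 0" using n by (auto simp: Ipow_def)
    then have "n0 \<le> n" using b by fastforce
    ultimately show "n = n0" by simp
  qed
  have "valI_ge f c \<longleftrightarrow> c \<le> real n0" using False by (simp add: valI_ge_def valI_def th)
  also have "\<dots> \<longleftrightarrow> (\<forall>e. real (mdeg e) < c \<longrightarrow> f e = 0)"
  proof
    assume c: "c \<le> real n0"
    show "\<forall>e. real (mdeg e) < c \<longrightarrow> f e = 0"
    proof (intro allI impI)
      fix e :: "'v \<Rightarrow> nat" assume e: "real (mdeg e) < c"
      show "f e = 0"
      proof (rule ccontr)
        assume "f e \<noteq> 0"
        then have "n0 \<le> mdeg e" by (rule b)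
        then have "real n0 \<le> real (mdeg e)" by simp
        then show False using e c by linarith
      qed
    qed
  next
    assume h: "\<forall>e. real (mdeg e) < c \<longrightarrow> f e = 0"
    show "c \<le> real n0" using a h by (meson not_less)
  qed
  finally show ?thesis .
qed

lemma isum_fin: "finite A \<Longrightarrow> isum A F = Rep_ms (\<Sum>i\<in>A. Abs_ms (F i))"
  unfolding isum_def
  by (rule ext, simp add: Rep_sum Rep_Abs, rule sum.mono_neutral_left) auto

lemma foldr_eq: "foldr mps_mult (map F xs) mps_one = Rep_ms (prod_list (map (\<lambda>i. Abs_ms (F i)) xs))"
  by (induction xs) (simp_all add: Rep_one Rep_mult Rep_Abs)

lemma mps_prod_eq: "finite S \<Longrightarrow> mps_prod S F = Rep_ms (\<Prod>i\<in>S. Abs_ms (F i))"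
  unfolding mps_prod_def mps_prod_list_def foldr_eq
  by (simp add: prod.distinct_set_conv_list[symmetric])

definition AbsM :: "('v::finite,'a::comm_ring_1) imat \<Rightarrow> nat \<Rightarrow> nat \<Rightarrow> ('v,'a) ms" where
  "AbsM A = (\<lambda>m n. Abs_ms (A m n))"

lemma minor_eq: "finite S \<Longrightarrow> minor_det A S = Rep_ms (Dg (AbsM A) S id id)"
  unfolding minor_det_def Dg_def
  by (simp add: isum_fin finite_permutations mps_prod_eq Abs_mult Rep_of_int[symmetric] Rep_ms_inverse AbsM_def)



definition bb :: "nat \<Rightarrow> nat \<Rightarrow> real" where "bb p d = real (p - 1) / real d"
definition kap :: "nat \<Rightarrow> real" where "kap n = real (n * (n - 1)) / 2"
definition ww :: "nat \<Rightarrow> nat \<Rightarrow> (nat \<Rightarrow> nat) \<Rightarrow> (nat \<Rightarrow> nat) \<Rightarrow> nat set \<Rightarrow> real" where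
  "ww p d r c I = (\<Sum>i\<in>I. real p * real (r i) - real (c i)) / real d"
definition tw :: "nat \<Rightarrow> nat \<Rightarrow> ('v::finite,'a::comm_ring_1) imat \<Rightarrow> bool" where
  "tw p d A \<longleftrightarrow> (\<forall>m n. vg (AbsM A m n) ((real m * real p - real n) / real d))"

lemma vg_Abs: "vg (Abs_ms f) c \<longleftrightarrow> (\<forall>e. real (mdeg e) < c \<longrightarrow> f e = 0)"
  by (simp add: vg_def Rep_Abs)

lemma tw_of: "twisted_incremental p d A \<Longrightarrow> tw p d A"
  unfolding twisted_incremental_def tw_def AbsM_def vg_Abs valI_ge_iff by blast

lemma bb_nonneg: "0 \<le> bb p d" by (simp add: bb_def)

lemma sum_perm_eq: "\<sigma> permutes I \<Longrightarrow> (\<Sum>i\<in>I. g (\<sigma> i)) = (\<Sum>i\<in>I. g i)"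
  using sum.permute[of \<sigma> I g] by (simp add: o_def)

lemma base_bound:
  assumes I: "finite I" and tA: "tw p d A"
  shows "vg (Dg (AbsM A) I r c) (ww p d r c I)"
  unfolding Dg_def
proof (rule vg_sum, rule vg_mult_left)
  fix \<sigma> assume "\<sigma> \<in> {\<sigma>. \<sigma> permutes I}"
  then have s: "\<sigma> permutes I" by simp
  have "vg (\<Prod>i\<in>I. AbsM A (r i) (c (\<sigma> i))) (\<Sum>i\<in>I. (real (r i) * real p - real (c (\<sigma> i))) / real d)"
    by (rule vg_prod[OF I]) (use tA in \<open>simp add: tw_def\<close>)
  moreover have "(\<Sum>i\<in>I. (real (r i) * real p - real (c (\<sigma> i))) / real d) = ww p d r c I"
    unfolding ww_def sum_divide_distrib[symmetric] sum_subtractf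
    using sum_perm_eq[OF s, of "\<lambda>i. real (c i)"] by (simp add: mult.commute)
  ultimately show "vg (\<Prod>i\<in>I. AbsM A (r i) (c (\<sigma> i))) (ww p d r c I)" by simp
qed

lemma ww_add:
  assumes p: "1 \<le> p"
  shows "ww p d r f I + ww p d f c I = ww p d r c I + bb p d * real (\<Sum>i\<in>I. f i)"
proof -
  have rp: "real (p - 1) = real p - 1" using p by simp
  have "(\<Sum>i\<in>I. real p * real (r i) - real (f i)) + (\<Sum>i\<in>I. real p * real (f i) - real (c i)) =
        (\<Sum>i\<in>I. (real p * real (r i) - real (c i)) + (real p - 1) * real (f i))"
    by (simp add: sum.distrib[symmetric] algebra_simps)
  also have "\<dots> = (\<Sum>i\<in>I. real p * real (r i) - real (c i)) + (real p - 1) * real (\<Sum>i\<in>I. f i)"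
    by (simp add: sum.distrib sum_distrib_left)
  finally have h: "(\<Sum>i\<in>I. real p * real (r i) - real (f i)) + (\<Sum>i\<in>I. real p * real (f i) - real (c i)) =
     (\<Sum>i\<in>I. real p * real (r i) - real (c i)) + (real p - 1) * real (\<Sum>i\<in>I. f i)" .
  show ?thesis unfolding ww_def bb_def rp
    by (simp only: add_divide_distrib[symmetric] h) (simp add: add_divide_distrib)
qed

lemma sum_inj_ge:
  assumes I: "finite I" and inj: "inj_on f I"
  shows "kap (card I) \<le> real (\<Sum>i\<in>I. f i)"
    and "f ` I \<noteq> {0..<card I} \<Longrightarrow> kap (card I) + 1 \<le> real (\<Sum>i\<in>I. f i)"
proof -
  have s: "(\<Sum>i\<in>I. f i) = \<Sum>(f ` I)" using sum.reindex[OF inj, of id] by simp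
  have c: "card (f ` I) = card I" using card_image[OF inj] .
  have h: "card I * (card I - 1) \<le> 2 * (\<Sum>i\<in>I. f i) \<and>
     (f ` I \<noteq> {0..<card I} \<longrightarrow> card I * (card I - 1) + 2 \<le> 2 * (\<Sum>i\<in>I. f i))"
    using sum_set_ge[of "f ` I"] I s c by simp
  show "kap (card I) \<le> real (\<Sum>i\<in>I. f i)"
    using h unfolding kap_def by linarith
  show "f ` I \<noteq> {0..<card I} \<Longrightarrow> kap (card I) + 1 \<le> real (\<Sum>i\<in>I. f i)"
    using h unfolding kap_def by linarith
qed

lemma ww_id: "1 \<le> p \<Longrightarrow> ww p d id id {0..<k} = bb p d * kap k"
proof -
  assume p: "1 \<le> p"
  have "ww p d id id {0..<k} + ww p d id id {0..<k} = ww p d id id {0..<k} + bb p d * real (\<Sum>i\<in>{0..<k}. i)"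
    using ww_add[OF p, where r=id and f=id and c=id and I="{0..<k}" and d=d] by simp
  moreover have "real (\<Sum>i\<in>{0..<k}. i) = kap k"
  proof -
    have "2 * real (\<Sum>i<k. i) = real (k * (k - 1))"
      using sum_lessThan_id[of k] by (metis of_nat_mult of_nat_numeral)
    then show ?thesis unfolding kap_def atLeast0LessThan by linarith
  qed
  ultimately show ?thesis by simp
qed

lemma trunc:
  fixes A B :: "('v::finite,'a::comm_ring_1) imat"
  assumes "\<And>l. K \<le> l \<Longrightarrow> vg (AbsM B l n) Lv"
  shows "vg (AbsM (mat_mult A B) m n - (\<Sum>l<K. AbsM A m l * AbsM B l n)) Lv"
  unfolding vg_def
proof (intro allI impI)
  fix e :: "'v \<Rightarrow> nat" assume e: "real (mdeg e) < Lv"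
  have z: "mps_mult (A m l) (B l n) e = 0" if "K \<le> l" for l
  proof -
    have "vg (AbsM A m l * AbsM B l n) Lv" using assms that by (simp add: vg_mult_left)
    then show ?thesis using e by (simp add: vg_def Rep_mult AbsM_def Rep_Abs)
  qed
  have "mat_mult A B m n e = (\<Sum>l\<in>{l. mps_mult (A m l) (B l n) e \<noteq> 0}. mps_mult (A m l) (B l n) e)"
    by (simp add: mat_mult_def isum_def)
  also have "\<dots> = (\<Sum>l<K. mps_mult (A m l) (B l n) e)"
  proof (rule sum.mono_neutral_left)
    show "{l. mps_mult (A m l) (B l n) e \<noteq> 0} \<subseteq> {..<K}" using z by (auto simp: not_less[symmetric])
  qed auto
  finally show "Rep_ms (AbsM (mat_mult A B) m n - (\<Sum>l<K. AbsM A m l * AbsM B l n)) e = 0"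
    by (simp add: Rep_diff Rep_sum Rep_mult AbsM_def Rep_Abs)
qed

lemma Dg_single: "Dg X {0} (\<lambda>_. l) (\<lambda>_. n) = X l n"
  by (simp add: Dg_def)

lemma chain1: "mat_chain M (Suc 0) = M 0"
proof (intro ext)
  fix m n e
  have t: "mps_mult (M 0 m l) (mat_id l n) e = (if l = n then M 0 m n e else 0)" for l
  proof (cases "l = n")
    case True then show ?thesis by (simp add: mat_id_def mult_comm[of _ mps_one] mult_one)
  next
    case False then show ?thesis by (simp add: mat_id_def mm_def2 mps_zero_def)
  qed
  have "mat_chain M (Suc 0) m n e = (\<Sum>l\<in>{l. mps_mult (M 0 m l) (mat_id l n) e \<noteq> 0}. mps_mult (M 0 m l) (mat_id l n) e)"
    by (simp add: mat_mult_def isum_def)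
  also have "\<dots> = (\<Sum>l\<in>{n}. mps_mult (M 0 m l) (mat_id l n) e)"
    by (rule sum.mono_neutral_left) (auto simp: t split: if_splits)
  also have "\<dots> = M 0 m n e" by (simp add: t)
  finally show "mat_chain M (Suc 0) m n e = M 0 m n e" .
qed



lemma ww_id_gen: "1 \<le> p \<Longrightarrow> ww p d id id S = bb p d * real (\<Sum>i\<in>S. i)"
  using ww_add[where p=p and r=id and f=id and c=id and I=S and d=d] by simp

lemma expand:
  fixes A B :: "('v::finite,'a::comm_ring_1) imat"
  assumes p: "1 \<le> p" and d: "0 < d"
    and hB: "\<And>I r c. finite I \<Longrightarrow> vg (Dg (AbsM B) I r c) (ww p d r c I + t * kap (card I))"
    and I: "finite I"
  shows "\<exists>K\<ge>K0. vg (Dg (AbsM (mat_mult A B)) I r c -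
     (\<Sum>f\<in>PiE I (\<lambda>_. {..<K}). (\<Prod>i\<in>I. AbsM A (r i) (f i)) * Dg (AbsM B) I f c)) Lv"
proof -
  define K where "K = K0 + nat \<lceil>Lv * real d\<rceil> + (\<Sum>i\<in>I. c i)"
  have ent: "vg (AbsM B l n) Lv" if l: "K \<le> l" and n: "n \<in> c ` I" for l n
  proof -
    have h: "vg (AbsM B l n) ((real p * real l - real n) / real d)"
      using hB[of "{0}" "\<lambda>_. l" "\<lambda>_. n"] by (simp add: Dg_single ww_def kap_def)
    obtain i where i: "i \<in> I" "n = c i" using n by auto
    have "n \<le> (\<Sum>i\<in>I. c i)" using i I by (auto intro: member_le_sum)
    then have "real n \<le> (\<Sum>i\<in>I. real (c i))" by (metis of_nat_le_iff of_nat_sum)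
    moreover have "real K = real K0 + real (nat \<lceil>Lv * real d\<rceil>) + real (\<Sum>i\<in>I. c i)"
      by (simp add: K_def)
    moreover have "real K \<le> real l" using l by simp
    moreover have "Lv * real d \<le> real (nat \<lceil>Lv * real d\<rceil>)" by (rule real_nat_ceiling_ge)
    moreover have "real l * 1 \<le> real l * real p" by (rule mult_left_mono) (use p in auto)
    ultimately have "Lv * real d \<le> real p * real l - real n"
      by (simp add: mult.commute)
    then have "Lv \<le> (real p * real l - real n) / real d" using d by (simp add: pos_le_divide_eq)
    then show ?thesis using h vg_mono by blast
  qed
  have 1: "vg (Dg (AbsM (mat_mult A B)) I r c - Dg (\<lambda>m n. \<Sum>l\<in>{..<K}. AbsM A m l * AbsM B l n) I r c) Lv"
  proof (rule Dg_vg_diff[OF I])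
    fix i i' assume "i \<in> I" "i' \<in> I"
    then show "vg (AbsM (mat_mult A B) (r i) (c i') - (\<Sum>l\<in>{..<K}. AbsM A (r i) l * AbsM B l (c i'))) Lv"
      by (intro trunc ent) auto
  qed
  have 2: "Dg (\<lambda>m n. \<Sum>l\<in>{..<K}. AbsM A m l * AbsM B l n) I r c =
     (\<Sum>f\<in>PiE I (\<lambda>_. {..<K}). (\<Prod>i\<in>I. AbsM A (r i) (f i)) * Dg (AbsM B) I f c)"
    by (rule Dg_CB[OF I]) simp
  show ?thesis using 1 2 by (intro exI[of _ K]) (simp add: K_def)
qed

lemma term_inj:
  fixes A B :: "('v::finite,'a::comm_ring_1) imat"
  assumes p: "1 \<le> p" and tA: "tw p d A"
    and hB: "\<And>I r c. finite I \<Longrightarrow> vg (Dg (AbsM B) I r c) (ww p d r c I + t * kap (card I))"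
    and I: "finite I"
  shows "vg ((\<Prod>i\<in>I. AbsM A (r i) (f i)) * Dg (AbsM B) I f c)
           (ww p d r c I + bb p d * real (\<Sum>i\<in>I. f i) + t * kap (card I))"
proof -
  have "vg (\<Prod>i\<in>I. AbsM A (r i) (f i)) (\<Sum>i\<in>I. (real (r i) * real p - real (f i)) / real d)"
    by (rule vg_prod[OF I]) (use tA in \<open>simp add: tw_def\<close>)
  moreover have "(\<Sum>i\<in>I. (real (r i) * real p - real (f i)) / real d) = ww p d r f I"
    unfolding ww_def sum_divide_distrib[symmetric] by (simp add: mult.commute)
  ultimately have a: "vg (\<Prod>i\<in>I. AbsM A (r i) (f i)) (ww p d r f I)" by simp
  have "vg ((\<Prod>i\<in>I. AbsM A (r i) (f i)) * Dg (AbsM B) I f c) (ww p d r f I + (ww p d f c I + t * kap (card I)))"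
    by (rule vg_mult[OF a hB[OF I]])
  then show ?thesis using ww_add[OF p, of d r f I c] by (simp add: algebra_simps)
qed

lemma term_noninj:
  assumes I: "finite I" and ni: "\<not> inj_on f I"
  shows "Dg X I f c = 0"
proof -
  obtain i j where "i \<in> I" "j \<in> I" "f i = f j" "i \<noteq> j" using ni by (auto simp: inj_on_def)
  then show ?thesis using Dg_identical[OF I] by blast
qed

lemma step_i:
  fixes A B :: "('v::finite,'a::comm_ring_1) imat"
  assumes p: "1 \<le> p" and d: "0 < d" and tA: "tw p d A"
    and hB: "\<And>I r c. finite I \<Longrightarrow> vg (Dg (AbsM B) I r c) (ww p d r c I + t * kap (card I))"
    and I: "finite I"
  shows "vg (Dg (AbsM (mat_mult A B)) I r c) (ww p d r c I + (t + bb p d) * kap (card I))"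
proof -
  let ?L = "ww p d r c I + (t + bb p d) * kap (card I)"
  let ?S = "\<lambda>K. (\<Sum>f\<in>PiE I (\<lambda>_. {..<K}). (\<Prod>i\<in>I. AbsM A (r i) (f i)) * Dg (AbsM B) I f c)"
  obtain K where K: "vg (Dg (AbsM (mat_mult A B)) I r c - ?S K) ?L"
    using expand[OF p d hB I, of 0 A r c ?L] by blast
  have "vg (?S K) ?L"
  proof (rule vg_sum)
    fix f assume "f \<in> PiE I (\<lambda>_. {..<K})"
    show "vg ((\<Prod>i\<in>I. AbsM A (r i) (f i)) * Dg (AbsM B) I f c) ?L"
    proof (cases "inj_on f I")
      case True
      have "bb p d * kap (card I) \<le> bb p d * real (\<Sum>i\<in>I. f i)"
        by (rule mult_left_mono[OF sum_inj_ge(1)[OF I True] bb_nonneg])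
      then have "?L \<le> ww p d r c I + bb p d * real (\<Sum>i\<in>I. f i) + t * kap (card I)"
        by (simp add: algebra_simps)
      then show ?thesis using term_inj[OF p tA hB I, of r f c] vg_mono by blast
    next
      case False
      have "Dg (AbsM B) I f c = 0" by (rule term_noninj[OF I False])
      then show ?thesis by (simp add: vg_zero)
    qed
  qed
  then have "vg ((Dg (AbsM (mat_mult A B)) I r c - ?S K) + ?S K) ?L" using K by (rule vg_add[rotated])
  then show ?thesis by simp
qed

lemma ring_id2: "(x::'r::comm_ring) - a * b = (x - s) + (s - a * b)" by simp

lemma step_ii:
  fixes A B :: "('v::finite,'a::comm_ring_1) imat"
  assumes p: "1 \<le> p" and d: "0 < d" and tA: "tw p d A"
    and hB: "\<And>I r c. finite I \<Longrightarrow> vg (Dg (AbsM B) I r c) (ww p d r c I + t * kap (card I))"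
  shows "vg (Dg (AbsM (mat_mult A B)) {0..<k} id id - Dg (AbsM A) {0..<k} id id * Dg (AbsM B) {0..<k} id id)
           (bb p d * kap k + (t + bb p d) * kap k + bb p d)"
proof -
  let ?I = "{0..<k}"
  let ?L = "bb p d * kap k + (t + bb p d) * kap k + bb p d"
  let ?F = "\<lambda>f. (\<Prod>i\<in>?I. AbsM A (id i) (f i)) * Dg (AbsM B) ?I f id"
  have I: "finite ?I" by simp
  obtain K where Kk: "k \<le> K" and K: "vg (Dg (AbsM (mat_mult A B)) ?I id id - sum ?F (PiE ?I (\<lambda>_. {..<K}))) ?L"
    using expand[OF p d hB I, of k A id id ?L] by blast
  let ?P = "PiE ?I (\<lambda>_. {..<K})"
  let ?M = "{f\<in>?P. f ` ?I = ?I}"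
  have sub: "?M \<subseteq> ?P" by auto
  have fin: "finite ?P" by (simp add: finite_PiE)
  have split: "sum ?F ?P = sum ?F (?P - ?M) + sum ?F ?M" by (rule sum.subset_diff[OF sub fin])
  have main: "sum ?F ?M = Dg (AbsM A) ?I id id * Dg (AbsM B) ?I id id"
  proof -
    have IL: "?I \<subseteq> {..<K}" using Kk by auto
    show ?thesis using Dg_main[OF I IL, of "AbsM A" "AbsM B" id] by simp
  qed
  have rest: "vg (sum ?F (?P - ?M)) ?L"
  proof (rule vg_sum)
    fix f assume f: "f \<in> ?P - ?M"
    then have fI: "f ` ?I \<noteq> {0..<card ?I}" by auto
    show "vg (?F f) ?L"
    proof (cases "inj_on f ?I")
      case True
      have "bb p d * (kap k + 1) \<le> bb p d * real (\<Sum>i\<in>?I. f i)"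
        by (rule mult_left_mono[OF _ bb_nonneg]) (use sum_inj_ge(2)[OF I True fI] in simp)
      moreover have "ww p d id id ?I = bb p d * kap k" by (rule ww_id[OF p])
      ultimately have "?L \<le> ww p d id id ?I + bb p d * real (\<Sum>i\<in>?I. f i) + t * kap (card ?I)"
        by (simp add: algebra_simps)
      then show ?thesis using term_inj[OF p tA hB I, of id f id] vg_mono by blast
    next
      case False
      have "Dg (AbsM B) ?I f id = 0" by (rule term_noninj[OF I False])
      then show ?thesis by (simp add: vg_zero)
    qed
  qed
  have "vg ((Dg (AbsM (mat_mult A B)) ?I id id - sum ?F ?P) + sum ?F (?P - ?M)) ?L"
    using K rest by (rule vg_add)
  moreover have "(Dg (AbsM (mat_mult A B)) ?I id id - sum ?F ?P) + sum ?F (?P - ?M) =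
     Dg (AbsM (mat_mult A B)) ?I id id - Dg (AbsM A) ?I id id * Dg (AbsM B) ?I id id"
    using split main by (simp add: algebra_simps)
  ultimately show ?thesis by (simp only:)
qed



lemma ring_id3: "(x::'r::comm_ring) - y * a = (x - a * z) + a * (z - y)" by (simp add: algebra_simps)

theorem mainTheorem11:
  fixes p d a :: nat
    and M :: "nat \<Rightarrow> ('v::finite, 'a::comm_ring_1) imat"
  assumes "prime p" and "d > 0" and "a \<ge> 1"
    and "\<forall>j<a. twisted_incremental p d (M j)"
  shows "\<forall>k. valI_ge (char_coeff (mat_chain M a) k)
                 (real (a * k * (k - 1) * (p - 1)) / (2 * real d))
          \<and> mps_diff (char_coeff (mat_chain M a) k)
                     (mps_prod {0..<a} (\<lambda>j. minor_det (M j) {0..<k}))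
              \<in> Ipow (nat \<lceil>(real (a * k * (k - 1) * (p - 1)) + real (p - 1)) / (2 * real d)\<rceil>)"
proof (intro allI)
  fix k
  have p1: "1 \<le> p" using assms(1) prime_ge_1_nat by blast
  have d: "0 < d" using assms(2) .
  let ?b = "bb p d"
  let ?D = "\<lambda>l. Dg (AbsM (M l)) {0..<k} id id"
  have tw: "tw p d (M j)" if "j < a" for j using assms(4) that tw_of by blast
  have P: "(\<forall>I r c. finite I \<longrightarrow> vg (Dg (AbsM (mat_chain M (Suc j))) I r c) (ww p d r c I + (real j * ?b) * kap (card I)))
      \<and> vg (Dg (AbsM (mat_chain M (Suc j))) {0..<k} id id - (\<Prod>l<Suc j. ?D l)) (real (Suc j) * ?b * kap k + ?b)"
    if "Suc j \<le> a" for j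
    using that
  proof (induction j)
    case 0
    have t0: "tw p d (M 0)" using tw 0 by simp
    show ?case
      unfolding chain1 by (auto simp: vg_zero intro: base_bound[OF _ t0])
  next
    case (Suc j)
    have pre: "Suc j \<le> a" using Suc.prems by simp
    have IH: "\<forall>I r c. finite I \<longrightarrow> vg (Dg (AbsM (mat_chain M (Suc j))) I r c) (ww p d r c I + (real j * ?b) * kap (card I))"
      using Suc.IH[OF pre] by (rule conjunct1)
    have IH2: "vg (Dg (AbsM (mat_chain M (Suc j))) {0..<k} id id - (\<Prod>l<Suc j. ?D l)) (real (Suc j) * ?b * kap k + ?b)"
      using Suc.IH[OF pre] by (rule conjunct2)
    have tA: "tw p d (M (Suc j))" using tw Suc.prems by simp
    have hB: "\<And>I r c. finite I \<Longrightarrow> vg (Dg (AbsM (mat_chain M (Suc j))) I r c) (ww p d r c I + (real j * ?b) * kap (card I))"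
      using IH by blast
    have ch: "mat_chain M (Suc (Suc j)) = mat_mult (M (Suc j)) (mat_chain M (Suc j))" by simp
    have i: "\<forall>I r c. finite I \<longrightarrow> vg (Dg (AbsM (mat_chain M (Suc (Suc j)))) I r c) (ww p d r c I + (real (Suc j) * ?b) * kap (card I))"
    proof (intro allI impI)
      fix I :: "nat set" and r c :: "nat \<Rightarrow> nat" assume I: "finite I"
      have "vg (Dg (AbsM (mat_chain M (Suc (Suc j)))) I r c) (ww p d r c I + (real j * ?b + ?b) * kap (card I))"
        unfolding ch by (rule step_i[OF p1 d tA hB I])
      then show "vg (Dg (AbsM (mat_chain M (Suc (Suc j)))) I r c) (ww p d r c I + (real (Suc j) * ?b) * kap (card I))"
        by (simp add: algebra_simps)
    qed
    have s2: "vg (Dg (AbsM (mat_chain M (Suc (Suc j)))) {0..<k} id id - ?D (Suc j) * Dg (AbsM (mat_chain M (Suc j))) {0..<k} id id)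
        (?b * kap k + (real j * ?b + ?b) * kap k + ?b)"
      unfolding ch by (rule step_ii[OF p1 d tA hB])
    have Db: "vg (?D (Suc j)) (?b * kap k)"
      using base_bound[OF _ tA, of "{0..<k}" id id] ww_id[OF p1, of d k] by simp
    have s3: "vg (?D (Suc j) * (Dg (AbsM (mat_chain M (Suc j))) {0..<k} id id - (\<Prod>l<Suc j. ?D l)))
        (?b * kap k + (real (Suc j) * ?b * kap k + ?b))"
      by (rule vg_mult[OF Db IH2])
    have eqL: "?b * kap k + (real j * ?b + ?b) * kap k + ?b = real (Suc (Suc j)) * ?b * kap k + ?b"
      by (simp add: algebra_simps)
    have eqL2: "?b * kap k + (real (Suc j) * ?b * kap k + ?b) = real (Suc (Suc j)) * ?b * kap k + ?b"
      by (simp add: algebra_simps)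
    have "vg ((Dg (AbsM (mat_chain M (Suc (Suc j)))) {0..<k} id id - ?D (Suc j) * Dg (AbsM (mat_chain M (Suc j))) {0..<k} id id)
       + ?D (Suc j) * (Dg (AbsM (mat_chain M (Suc j))) {0..<k} id id - (\<Prod>l<Suc j. ?D l)))
       (real (Suc (Suc j)) * ?b * kap k + ?b)"
      using s2 s3 unfolding eqL eqL2 by (rule vg_add)
    moreover have "Dg (AbsM (mat_chain M (Suc (Suc j)))) {0..<k} id id - (\<Prod>l<Suc (Suc j). ?D l) =
       (Dg (AbsM (mat_chain M (Suc (Suc j)))) {0..<k} id id - ?D (Suc j) * Dg (AbsM (mat_chain M (Suc j))) {0..<k} id id)
       + ?D (Suc j) * (Dg (AbsM (mat_chain M (Suc j))) {0..<k} id id - (\<Prod>l<Suc j. ?D l))"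
      unfolding prod.lessThan_Suc[of _ "Suc j"] by (rule ring_id3)
    ultimately have ii: "vg (Dg (AbsM (mat_chain M (Suc (Suc j)))) {0..<k} id id - (\<Prod>l<Suc (Suc j). ?D l))
       (real (Suc (Suc j)) * ?b * kap k + ?b)"
      by (simp only:)
    show ?case using i ii by blast
  qed
  obtain j where aj: "a = Suc j" using assms(3) by (cases a) auto
  let ?C = "mat_chain M a"
  note Pj = P[of j, unfolded aj[symmetric], OF order_refl]
  have Pi: "\<And>S. finite S \<Longrightarrow> vg (Dg (AbsM ?C) S id id) (?b * real (\<Sum>i\<in>S. i) + (real j * ?b) * kap (card S))"
  proof -
    fix S :: "nat set" assume S: "finite S"
    have "vg (Dg (AbsM ?C) S id id) (ww p d id id S + (real j * ?b) * kap (card S))"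
      using conjunct1[OF Pj] S by blast
    then show "vg (Dg (AbsM ?C) S id id) (?b * real (\<Sum>i\<in>S. i) + (real j * ?b) * kap (card S))"
      by (simp only: ww_id_gen[OF p1])
  qed
  have Pii: "vg (Dg (AbsM ?C) {0..<k} id id - (\<Prod>l<a. ?D l)) (real a * ?b * kap k + ?b)"
    by (rule conjunct2[OF Pj])
  define X where "X = real (a * k * (k - 1) * (p - 1)) / (2 * real d)"
  have X: "X = real a * ?b * kap k"
    unfolding X_def bb_def kap_def using d by (simp add: field_simps)
  have b0: "0 \<le> ?b" by (rule bb_nonneg)
  have Sbound: "vg (Dg (AbsM ?C) S id id) (X + (if S = {0..<k} then 0 else ?b))"
    if S: "finite S" "card S = k" for S
  proof -
    have inj: "inj_on id S" by simp
    have k1: "kap k \<le> real (\<Sum>i\<in>S. i)" using sum_inj_ge(1)[OF S(1) inj] S(2) by simp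
    have k2: "S \<noteq> {0..<k} \<Longrightarrow> kap k + 1 \<le> real (\<Sum>i\<in>S. i)" using sum_inj_ge(2)[OF S(1) inj] S(2) by simp
    have "X + (if S = {0..<k} then 0 else ?b) \<le> ?b * real (\<Sum>i\<in>S. i) + (real j * ?b) * kap (card S)"
    proof (cases "S = {0..<k}")
      case True
      have "?b * kap k \<le> ?b * real (\<Sum>i\<in>S. i)" using k1 b0 by (rule mult_left_mono)
      then show ?thesis using True S(2) unfolding X aj by (simp add: algebra_simps)
    next
      case False
      have "?b * (kap k + 1) \<le> ?b * real (\<Sum>i\<in>S. i)" using k2[OF False] b0 by (rule mult_left_mono)
      then show ?thesis using False S(2) unfolding X aj by (simp add: algebra_simps)
    qed
    then show ?thesis using Pi[OF S(1)] vg_mono by blast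
  qed
  have minorS: "minor_det ?C S e = 0" if S: "finite S" "card S = k" and e: "real (mdeg e) < X + (if S = {0..<k} then 0 else ?b)" for S and e :: "'v \<Rightarrow> nat"
    using Sbound[OF S] e by (simp add: minor_eq[OF S(1)] vg_def)
  have claim1: "valI_ge (char_coeff ?C k) X"
    unfolding valI_ge_iff
  proof (intro allI impI)
    fix e :: "'v \<Rightarrow> nat" assume e: "real (mdeg e) < X"
    have z: "minor_det ?C S e = 0" if "finite S" "card S = k" for S
    proof (rule minorS[OF that])
      show "real (mdeg e) < X + (if S = {0..<k} then 0 else ?b)" using e b0 by simp
    qed
    have "{S \<in> {S. finite S \<and> card S = k}. minor_det ?C S e \<noteq> 0} = {}"
      using z by auto
    then show "char_coeff ?C k e = 0" by (simp add: char_coeff_def isum_def)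
  qed
  define Y where "Y = (real (a * k * (k - 1) * (p - 1)) + real (p - 1)) / (2 * real d)"
  have Y: "Y = X + ?b / 2"
    unfolding Y_def X_def bb_def using d by (simp add: field_simps)
  have claim2: "mps_diff (char_coeff ?C k) (mps_prod {0..<a} (\<lambda>j. minor_det (M j) {0..<k})) \<in> Ipow (nat \<lceil>Y\<rceil>)"
    unfolding Ipow_def
  proof (intro CollectI allI impI)
    fix e :: "'v \<Rightarrow> nat" assume e0: "mdeg e < nat \<lceil>Y\<rceil>"
    have eY: "real (mdeg e) < Y"
    proof (rule ccontr)
      assume "\<not> real (mdeg e) < Y"
      then have "\<lceil>Y\<rceil> \<le> int (mdeg e)" by (simp add: ceiling_le_iff)
      then show False using e0 by linarith
    qed
    then have e: "real (mdeg e) < X + ?b" using Y b0 by linarith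
    let ?F = "\<lambda>S. minor_det ?C S e"
    have "char_coeff ?C k e = (\<Sum>S\<in>{S \<in> {S. finite S \<and> card S = k}. ?F S \<noteq> 0}. ?F S)"
      by (simp add: char_coeff_def isum_def)
    also have "\<dots> = (\<Sum>S\<in>{{0..<k}}. ?F S)"
    proof (rule sum.mono_neutral_left)
      show "{S \<in> {S. finite S \<and> card S = k}. ?F S \<noteq> 0} \<subseteq> {{0..<k}}"
      proof (intro subsetI)
        fix S assume "S \<in> {S \<in> {S. finite S \<and> card S = k}. ?F S \<noteq> 0}"
        then have S: "finite S" "card S = k" "?F S \<noteq> 0" by auto
        show "S \<in> {{0..<k}}"
        proof (rule ccontr)
          assume "S \<notin> {{0..<k}}"
          then have "S \<noteq> {0..<k}" by simp
          then have "?F S = 0" using minorS[OF S(1) S(2), of e] e by simp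
          then show False using S(3) by simp
        qed
      qed
    qed auto
    also have "\<dots> = Rep_ms (Dg (AbsM ?C) {0..<k} id id) e" by (simp add: minor_eq)
    finally have c1: "char_coeff ?C k e = Rep_ms (Dg (AbsM ?C) {0..<k} id id) e" .
    have c2: "mps_prod {0..<a} (\<lambda>j. minor_det (M j) {0..<k}) = Rep_ms (\<Prod>l<a. ?D l)"
      by (simp add: mps_prod_eq minor_eq Rep_ms_inverse atLeast0LessThan)
    have "real (mdeg e) < real a * ?b * kap k + ?b" using e X by simp
    then have "Rep_ms (Dg (AbsM ?C) {0..<k} id id - (\<Prod>l<a. ?D l)) e = 0" using Pii by (simp add: vg_def)
    then show "mps_diff (char_coeff ?C k) (mps_prod {0..<a} (\<lambda>j. minor_det (M j) {0..<k})) e = 0"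
      by (simp add: mps_diff_def c1 c2 Rep_diff)
  qed
  show "valI_ge (char_coeff ?C k) (real (a * k * (k - 1) * (p - 1)) / (2 * real d))
          \<and> mps_diff (char_coeff ?C k) (mps_prod {0..<a} (\<lambda>j. minor_det (M j) {0..<k}))
              \<in> Ipow (nat \<lceil>(real (a * k * (k - 1) * (p - 1)) + real (p - 1)) / (2 * real d)\<rceil>)"
    using claim1 claim2 unfolding X_def Y_def by blast
qed



end
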